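(* Let $(G,\phi)$ be a test-fee structure with $\phi_d\ge0$ and $\phi_t<\int_{\mu+\phi_d}^{\overline{\theta}}[s-(\mu+\phi_d)]\,dG(s)$. Then: (a) a highest equilibrium threshold exists; (b) a threshold $\tau\ge\underline{s}_G$ is the highest equilibrium threshold if and only if $\tau-\phi_d=E_G[s\mid s\le\tau]$ and $\tau'-\phi_d>E_G[s\mid s\le\tau']$ for all $\tau'>\tau$; (c) there exists an adversarial equilibrium in which the agent discloses score $s$ if and only if $s>\tau$, where $\tau$ is the highest equilibrium threshold.
   Context: The asset value $\theta\sim F$ with support in $[\underline{\theta},\overline{\theta}]$ ($0\le\underline{\theta}<\overline{\theta}<\infty$ the extreme support points) and mean $\mu$. A test-fee structure $(G,\phi)$ consists of the marginal score CDF $G$ of an unbiased test (score $s\in[\underline{\theta},\overline{\theta}]$ with $E[\theta\mid s]=s$) and fees $\phi=(\phi_t,\phi_d)$. In the induced game the agent, not observing $\theta$, decides whether to pay $\phi_t$ to privately observe $s\sim G$, then whether to pay $\phi_d$ to verifiably disclose $s$ to two buyers, who otherwise see a null message; buyers bid in a first-price auction; the agent receives price minus fees. Equilibrium is perfect Bayesian equilibrium; the intermediary's revenue is the expected total fees paid; an adversarial equilibrium is one minimizing this revenue over all equilibria. $\underline{s}_G$ is the lowest score in the support of $G$. A threshold $\tau\ge\underline{s}_G$ is an equilibrium threshold for $(G,\phi)$ if $\tau-\phi_d=E_G[s\mid s\le\tau]$. *)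

theory Defs
  imports "HOL-Probability.Probability"
begin

definition mean_of :: "real measure \<Rightarrow> real" where
  "mean_of M = (\<integral>x. x \<partial>M)"

(* G is the marginal score distribution of an unbiased test of theta ~ F:
   there is a joint law J of (theta, s) with marginals F and G such that
   E[theta | s] = s, i.e. E[theta 1{s \<in> A}] = E[s 1{s \<in> A}] for all Borel A. *)
definition unbiased_test :: "real measure \<Rightarrow> real measure \<Rightarrow> bool" where
  "unbiased_test F G \<longleftrightarrow>
     (\<exists>J :: (real \<times> real) measure.
        prob_space J \<and> sets J = sets borel \<and>
        distr J borel fst = F \<and> distr J borel snd = G \<and>
        (\<forall>A \<in> sets (borel :: real measure).
            (\<integral>x. indicator A (snd x) * fst x \<partial>J) = (\<integral>x. indicator A (snd x) * snd x \<partial>J)))"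

definition low_score :: "real measure \<Rightarrow> real" where
  "low_score G = Inf {x. measure G {..x} > 0}"

(* E_G[s | s \<le> tau]; convention: equals tau when G(tau) = 0
   (which for tau \<ge> low_score G only happens at tau = low_score G) *)
definition cond_mean_below :: "real measure \<Rightarrow> real \<Rightarrow> real" where
  "cond_mean_below G \<tau> =
     (if measure G {..\<tau>} > 0 then (\<integral>s\<in>{..\<tau>}. s \<partial>G) / measure G {..\<tau>} else \<tau>)"

definition eq_threshold :: "real measure \<Rightarrow> real \<Rightarrow> real \<Rightarrow> bool" where
  "eq_threshold G \<phi>d \<tau> \<longleftrightarrow> low_score G \<le> \<tau> \<and> \<tau> - \<phi>d = cond_mean_below G \<tau>"

definition highest_eq_threshold :: "real measure \<Rightarrow> real \<Rightarrow> real \<Rightarrow> bool" where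
  "highest_eq_threshold G \<phi>d \<tau> \<longleftrightarrow>
     eq_threshold G \<phi>d \<tau> \<and> (\<forall>\<tau>'. eq_threshold G \<phi>d \<tau>' \<longrightarrow> \<tau>' \<le> \<tau>)"

(* A (behavioural) strategy profile with beliefs is (q, d, p0):
   q  = probability the agent buys the test,
   d s = probability the agent discloses score s,
   p0 = price after the null message (= buyers' posterior mean of theta, the
        outcome of the first-price auction between two symmetrically informed buyers).
   After disclosure of s the price is E[theta | s] = s. *)
definition test_value ::
  "real measure \<Rightarrow> real \<Rightarrow> real \<Rightarrow> (real \<Rightarrow> real) \<Rightarrow> real \<Rightarrow> real" where
  "test_value G \<phi>t \<phi>d d p0 =
     - \<phi>t + (\<integral>s. d s * (s - \<phi>d) + (1 - d s) * p0 \<partial>G)"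

definition is_equilibrium ::
  "real \<Rightarrow> real \<Rightarrow> real \<Rightarrow> real measure \<Rightarrow> real \<Rightarrow> real \<Rightarrow>
   real \<Rightarrow> (real \<Rightarrow> real) \<Rightarrow> real \<Rightarrow> bool" where
  "is_equilibrium \<theta>lo \<theta>hi \<mu> G \<phi>t \<phi>d q d p0 \<longleftrightarrow>
     0 \<le> q \<and> q \<le> 1 \<and> d \<in> borel_measurable borel \<and> (\<forall>s. 0 \<le> d s \<and> d s \<le> 1) \<and>
     \<theta>lo \<le> p0 \<and> p0 \<le> \<theta>hi \<and>
     \<comment> \<open>sequential rationality of disclosure, at every score\<close>
     (\<forall>s. 0 < d s \<longrightarrow> p0 \<le> s - \<phi>d) \<and> (\<forall>s. d s < 1 \<longrightarrow> s - \<phi>d \<le> p0) \<and>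
     \<comment> \<open>optimality of the testing decision (untested agent receives p0)\<close>
     (0 < q \<longrightarrow> p0 \<le> test_value G \<phi>t \<phi>d d p0) \<and>
     (q < 1 \<longrightarrow> test_value G \<phi>t \<phi>d d p0 \<le> p0) \<and>
     \<comment> \<open>Bayes consistency of the null-message price whenever it is on path\<close>
     (let N = (1 - q) + q * (\<integral>s. 1 - d s \<partial>G)
      in 0 < N \<longrightarrow> p0 * N = (1 - q) * \<mu> + q * (\<integral>s. (1 - d s) * s \<partial>G))"

definition revenue :: "real measure \<Rightarrow> real \<Rightarrow> real \<Rightarrow> real \<Rightarrow> (real \<Rightarrow> real) \<Rightarrow> real" where
  "revenue G \<phi>t \<phi>d q d = q * \<phi>t + q * \<phi>d * (\<integral>s. d s \<partial>G)"

definition adversarial_equilibrium ::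
  "real \<Rightarrow> real \<Rightarrow> real \<Rightarrow> real measure \<Rightarrow> real \<Rightarrow> real \<Rightarrow>
   real \<Rightarrow> (real \<Rightarrow> real) \<Rightarrow> real \<Rightarrow> bool" where
  "adversarial_equilibrium \<theta>lo \<theta>hi \<mu> G \<phi>t \<phi>d q d p0 \<longleftrightarrow>
     is_equilibrium \<theta>lo \<theta>hi \<mu> G \<phi>t \<phi>d q d p0 \<and>
     (\<forall>q' d' p0'. is_equilibrium \<theta>lo \<theta>hi \<mu> G \<phi>t \<phi>d q' d' p0' \<longrightarrow>
        revenue G \<phi>t \<phi>d q d \<le> revenue G \<phi>t \<phi>d q' d')"

end

theory Submission
  imports Defs
begin

locale Gsetup = prob_space G for G :: "real measure" +
  fixes tlo thi fd :: real
  assumes Gs: "sets G = sets borel"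
    and Gsupp: "AE s in G. tlo \<le> s \<and> s \<le> thi"
    and lo0: "0 \<le> tlo" and lohi: "tlo < thi" and fd0: "0 \<le> fd"
begin

lemma meas_G: "f \<in> borel_measurable G \<longleftrightarrow> f \<in> borel_measurable borel"
  by (subst measurable_cong_sets[OF Gs refl]) (rule refl)

lemma sets_G_iff[simp]: "A \<in> sets G \<longleftrightarrow> A \<in> sets borel" using Gs by simp

lemma intg:
  fixes B :: real
  assumes "f \<in> borel_measurable borel" "\<And>s. tlo \<le> s \<Longrightarrow> s \<le> thi \<Longrightarrow> \<bar>f s\<bar> \<le> B"
  shows "integrable G f"
proof (rule integrable_const_bound[where B=B])
  show "AE x in G. norm (f x) \<le> B" using Gsupp by eventually_elim (use assms(2) in auto)
  show "f \<in> borel_measurable G" using meas_G[THEN iffD2, OF assms(1)] .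
qed

definition Gc where "Gc x = measure G {..x}"
definition Lf where "Lf x = (\<integral>s. max 0 (x - s) \<partial>G)"
definition Kf where "Kf x = Lf x - fd * Gc x"
definition Phi where "Phi t = (\<integral>s. max 0 (s - t) \<partial>G)"
definition muG where "muG = (\<integral>s. s \<partial>G)"

lemma intg_s: "integrable G (\<lambda>s. s)"
  by (rule intg[where B=thi]) (use lo0 in auto)
lemma intg_L: "integrable G (\<lambda>s. max 0 (x - s))"
  by (rule intg[where B="\<bar>x\<bar> + thi"]) (use lo0 in auto)
lemma intg_P: "integrable G (\<lambda>s. max 0 (s - x))"
  by (rule intg[where B="\<bar>x\<bar> + thi"]) (use lo0 in auto)
lemma intg_ind: "integrable G (\<lambda>s. indicator {..x} s :: real)"
  by (rule intg[where B=1]) (auto simp: indicator_def)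

lemma Gc_mono: "x \<le> y \<Longrightarrow> Gc x \<le> Gc y"
  unfolding Gc_def by (intro finite_measure_mono) auto

lemma Gc_int: "Gc x = (\<integral>s. indicator {..x} s \<partial>G)"
  unfolding Gc_def by simp

lemma Gc_le1: "Gc x \<le> 1" unfolding Gc_def by simp
lemma Gc_ge0: "0 \<le> Gc x" unfolding Gc_def by simp

lemma Lf_lip: assumes "x \<le> y" shows "Lf y \<le> Lf x + (y - x)"
proof -
  have ii: "integrable G (\<lambda>s. max 0 (x - s) + (y - x))"
    by (rule Bochner_Integration.integrable_add[OF intg_L integrable_const])
  have "Lf y \<le> (\<integral>s. max 0 (x - s) + (y - x) \<partial>G)"
    unfolding Lf_def by (rule integral_mono[OF intg_L ii]) (use assms in auto)
  also have "\<dots> = Lf x + (y - x)" unfolding Lf_def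
    by (subst Bochner_Integration.integral_add) (auto intro: intg_L simp: prob_space)
  finally show ?thesis .
qed

lemma Kf_prop: assumes "x \<le> y" shows "Kf y \<le> Kf x + (y - x)"
  using Lf_lip[OF assms] Gc_mono[OF assms] fd0 unfolding Kf_def
  by (smt (verit) mult_left_mono)


lemma AE_int_eq0: "(\<And>s. tlo \<le> s \<Longrightarrow> s \<le> thi \<Longrightarrow> f s = 0) \<Longrightarrow> (\<integral>s. f s \<partial>G) = (0::real)"
  by (rule integral_eq_zero_AE) (use Gsupp in \<open>eventually_elim, auto\<close>)

lemma Gc_below: "x < tlo \<Longrightarrow> Gc x = 0"
  unfolding Gc_int by (rule AE_int_eq0) (auto simp: indicator_def)

lemma Gc_top: "Gc thi = 1"
proof -
  have "Gc thi = (\<integral>s. 1 \<partial>G)" unfolding Gc_int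
    by (rule integral_cong_AE) (use Gsupp in \<open>auto simp: indicator_def meas_G\<close>)
  then show ?thesis by (simp add: prob_space)
qed

definition low where "low = low_score G"

lemma low_set_eq: "{x. measure G {..x} > 0} = {x. Gc x > 0}" unfolding Gc_def by simp

lemma low_bdd: "bdd_below {x. Gc x > 0}"
proof (rule bdd_belowI[where m=tlo])
  fix x assume "x \<in> {x. Gc x > 0}"
  then show "tlo \<le> x" using Gc_below[of x] by (cases "x < tlo") auto
qed

lemma low_ne: "thi \<in> {x. Gc x > 0}" using Gc_top by simp

lemma low_le: "low \<le> thi"
  unfolding low_def low_score_def low_set_eq by (rule cInf_lower[OF low_ne low_bdd])

lemma low_ge: "tlo \<le> low"
  unfolding low_def low_score_def low_set_eq
proof (rule cInf_greatest)
  show "{x. Gc x > 0} \<noteq> {}" using low_ne by blast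
  fix x assume "x \<in> {x. Gc x > 0}"
  then show "tlo \<le> x" using Gc_below[of x] by (cases "x < tlo") auto
qed

lemma Gc_pos: assumes "low < x" shows "0 < Gc x"
proof -
  have "Inf {x. Gc x > 0} < x" using assms unfolding low_def low_score_def low_set_eq .
  moreover have "{x. Gc x > 0} \<noteq> {}" using low_ne by blast
  ultimately obtain y where "y \<in> {x. Gc x > 0}" "y < x" using cInf_lessD by metis
  then show ?thesis using Gc_mono[of y x] by auto
qed

lemma Gc_le0: assumes "y < low" shows "Gc y = 0"
proof (rule ccontr)
  assume "Gc y \<noteq> 0"
  then have "y \<in> {x. Gc x > 0}" using Gc_ge0[of y] by simp
  then have "low \<le> y" unfolding low_def low_score_def low_set_eq by (rule cInf_lower[OF _ low_bdd])
  then show False using assms by simp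
qed

lemma AE_low: "AE s in G. low \<le> s"
proof -
  let ?N = "\<lambda>n::nat. {..low - 1 / Suc n}"
  have "emeasure G (\<Union>n. ?N n) = 0"
  proof (rule emeasure_UN_eq_0)
    fix n :: nat
    have "Gc (low - 1 / Suc n) = 0" by (rule Gc_le0) auto
    then show "emeasure G (?N n) = 0" unfolding Gc_def
      by (simp add: emeasure_eq_measure)
  qed auto
  moreover have "(\<Union>n. ?N n) = {..<low}"
  proof (intro equalityI subsetI)
    fix x assume "x \<in> {..<low}"
    then have "0 < low - x" by simp
    then obtain n :: nat where "1 / Suc n < low - x"
      using reals_Archimedean[of "low - x"] by (auto simp: inverse_eq_divide)
    then have "x \<in> ?N n" by simp
    then show "x \<in> (\<Union>n. ?N n)" by blast
  next
    fix x assume "x \<in> (\<Union>n. ?N n)"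
    then obtain n where "x \<in> ?N n" by blast
    then have "x \<le> low - 1 / real (Suc n)" by simp
    moreover have "0 < 1 / real (Suc n)" by simp
    ultimately have "x < low" by linarith
    then show "x \<in> {..<low}" by simp
  qed
  ultimately have "{..<low} \<in> null_sets G" by (auto simp: null_sets_def)
  then show ?thesis by (rule AE_I') auto
qed

lemma Gsupp2: "AE s in G. low \<le> s \<and> tlo \<le> s \<and> s \<le> thi" using AE_low Gsupp by eventually_elim auto

lemma Lf_low: assumes "low \<le> x" shows "Lf x \<le> (x - low) * Gc x"
proof -
  have "Lf x \<le> (\<integral>s. (x - low) * indicator {..x} s \<partial>G)" unfolding Lf_def
  proof (rule integral_mono_AE[OF intg_L])
    show "integrable G (\<lambda>s. (x - low) * indicator {..x} s)" using intg_ind by simp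
    show "AE s in G. max 0 (x - s) \<le> (x - low) * indicator {..x} s"
      using AE_low by eventually_elim (auto simp: indicator_def)
  qed
  also have "\<dots> = (x - low) * Gc x" unfolding Gc_int by simp
  finally show ?thesis .
qed

lemma Kf_low: "low \<le> x \<Longrightarrow> Kf x \<le> (x - low - fd) * Gc x"
  using Lf_low[of x] unfolding Kf_def by (simp add: algebra_simps)

lemma Kf_big: "x - fd - muG \<le> Kf x"
proof -
  have "x - muG \<le> Lf x"
  proof -
    have "x - muG = (\<integral>s. x - s \<partial>G)" unfolding muG_def
      by (subst Bochner_Integration.integral_diff) (auto intro: intg_s simp: prob_space)
    also have "\<dots> \<le> Lf x" unfolding Lf_def
      by (rule integral_mono[OF _ intg_L]) (auto intro: Bochner_Integration.integrable_diff intg_s)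
    finally show ?thesis .
  qed
  then show ?thesis unfolding Kf_def using Gc_le1[of x] fd0 by (smt (verit) mult_left_le)
qed

lemma Iint: "(\<integral>s\<in>{..x}. s \<partial>G) = x * Gc x - Lf x"
proof -
  have "(\<integral>s\<in>{..x}. s \<partial>G) = (\<integral>s. x * indicator {..x} s - max 0 (x - s) \<partial>G)"
    unfolding set_lebesgue_integral_def
    by (rule Bochner_Integration.integral_cong) (auto simp: indicator_def)
  also have "\<dots> = x * Gc x - Lf x" unfolding Gc_int Lf_def
    by (subst Bochner_Integration.integral_diff) (auto intro: intg_L intg_ind)
  finally show ?thesis .
qed

lemma cmb_eq: "0 < Gc x \<Longrightarrow> cond_mean_below G x = x - Lf x / Gc x"
  unfolding cond_mean_below_def Iint by (auto simp: Gc_def[symmetric] field_simps)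

lemma cmb_iff: assumes "0 < Gc x"
  shows "(x - fd = cond_mean_below G x \<longleftrightarrow> Kf x = 0) \<and> (x - fd > cond_mean_below G x \<longleftrightarrow> Kf x > 0)"
proof -
  have a: "x - fd = x - Lf x / Gc x \<longleftrightarrow> Lf x = fd * Gc x" using assms
    by (auto simp: divide_eq_eq)
  have b: "x - fd > x - Lf x / Gc x \<longleftrightarrow> Lf x > fd * Gc x" using assms
    by (auto simp: less_divide_eq)
  show ?thesis unfolding cmb_eq[OF assms] Kf_def a b by auto
qed


lemma eq_thr_iff: "eq_threshold G fd x \<longleftrightarrow> low \<le> x \<and> x - fd = cond_mean_below G x"
  unfolding eq_threshold_def low_def ..

lemma sigma_ex: "\<exists>\<sigma>. eq_threshold G fd \<sigma> \<and> Kf \<sigma> = 0 \<and> (\<forall>x>\<sigma>. Kf x > 0)"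
proof -
  define b where "b = max (muG + fd) thi + 1"
  have Kb: "\<And>x. b \<le> x \<Longrightarrow> 0 < Kf x" using Kf_big unfolding b_def by (smt (verit))
  have lowb: "low < b" using low_le unfolding b_def by simp
  define S where "S = {x. low \<le> x \<and> x \<le> b \<and> Kf x \<le> 0}"
  have Klow: "Kf low \<le> 0"
  proof -
    have "Kf low \<le> - (fd * Gc low)" using Kf_low[of low] by simp
    moreover have "0 \<le> fd * Gc low" using fd0 Gc_ge0[of low] by simp
    ultimately show ?thesis by linarith
  qed
  have lowS: "low \<in> S" unfolding S_def using Klow lowb by simp
  have bdd: "bdd_above S" unfolding S_def by (rule bdd_aboveI[where M=b]) auto
  define \<sigma> where "\<sigma> = Sup S"
  have s1: "low \<le> \<sigma>" unfolding \<sigma>_def by (rule cSup_upper[OF lowS bdd])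
  have s2: "\<sigma> \<le> b" unfolding \<sigma>_def by (rule cSup_least) (use lowS S_def in auto)
  have K1: "Kf \<sigma> \<le> 0"
  proof (rule ccontr)
    assume "\<not> Kf \<sigma> \<le> 0"
    then have "\<sigma> - Kf \<sigma> < Sup S" unfolding \<sigma>_def by simp
    then obtain x where x: "x \<in> S" "\<sigma> - Kf \<sigma> < x" using less_cSup_iff[OF _ bdd] lowS by blast
    have "x \<le> \<sigma>" unfolding \<sigma>_def by (rule cSup_upper[OF x(1) bdd])
    then have "Kf \<sigma> \<le> Kf x + (\<sigma> - x)" by (rule Kf_prop)
    moreover have "Kf x \<le> 0" using x(1) unfolding S_def by simp
    ultimately show False using x(2) by simp
  qed
  have K2: "Kf \<sigma> \<ge> 0"
  proof (rule ccontr)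
    assume a: "\<not> Kf \<sigma> \<ge> 0"
    then have "\<sigma> < b" using s2 Kb[of b] by (cases "\<sigma> = b") auto
    define x where "x = \<sigma> + min (- Kf \<sigma>) (b - \<sigma>) / 2"
    have x1: "\<sigma> < x" "x \<le> b" "x - \<sigma> < - Kf \<sigma>" using a \<open>\<sigma> < b\<close> unfolding x_def by (auto simp: min_def field_simps)
    have "Kf x \<le> Kf \<sigma> + (x - \<sigma>)" by (rule Kf_prop) (use x1 in simp)
    then have "x \<in> S" unfolding S_def using x1 s1 by simp
    then have "x \<le> \<sigma>" unfolding \<sigma>_def by (rule cSup_upper[OF _ bdd])
    then show False using x1 by simp
  qed
  have K3: "\<forall>x>\<sigma>. Kf x > 0"
  proof (intro allI impI)
    fix x assume "\<sigma> < x"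
    show "0 < Kf x"
    proof (cases "x \<le> b")
      case True
      show ?thesis
      proof (rule ccontr)
        assume "\<not> 0 < Kf x"
        then have "x \<in> S" unfolding S_def using True s1 \<open>\<sigma> < x\<close> by simp
        then have "x \<le> \<sigma>" unfolding \<sigma>_def by (rule cSup_upper[OF _ bdd])
        then show False using \<open>\<sigma> < x\<close> by simp
      qed
    next
      case False then show ?thesis using Kb by simp
    qed
  qed
  have thr: "eq_threshold G fd \<sigma>"
  proof (cases "0 < Gc \<sigma>")
    case True
    then show ?thesis unfolding eq_thr_iff using cmb_iff[OF True] K1 K2 s1 by simp
  next
    case False
    then have slow: "\<sigma> = low" using Gc_pos s1 by force
    have "fd = 0"
    proof (rule ccontr)
      assume "fd \<noteq> 0"
      then have fp: "0 < fd" using fd0 by simp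
      have "0 < Kf (low + fd / 2)" using K3 slow fp by simp
      moreover have "Kf (low + fd / 2) \<le> (low + fd / 2 - low - fd) * Gc (low + fd / 2)"
        by (rule Kf_low) (use fp in simp)
      moreover have "(low + fd / 2 - low - fd) * Gc (low + fd / 2) \<le> 0"
        using fp Gc_ge0[of "low + fd / 2"] by (simp add: mult_nonpos_nonneg)
      ultimately show False by simp
    qed
    moreover have "\<not> 0 < measure G {..\<sigma>}" using False unfolding Gc_def .
    ultimately show ?thesis unfolding eq_thr_iff cond_mean_below_def using s1 by simp
  qed
  show ?thesis using thr K1 K2 K3 by (intro exI[of _ \<sigma>]) simp
qed


lemma Phi_anti: assumes "t \<le> t'" shows "Phi t' \<le> Phi t"
  unfolding Phi_def by (rule integral_mono[OF intg_P intg_P]) (use assms in auto)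

lemma fee_le: "(\<integral>s\<in>{c..thi}. s - c \<partial>G) \<le> Phi c"
  unfolding set_lebesgue_integral_def Phi_def
proof (rule integral_mono[OF _ intg_P])
  show "integrable G (\<lambda>s. indicator {c..thi} s *\<^sub>R (s - c))"
    by (rule intg[where B="\<bar>c\<bar> + thi"]) (use lo0 in \<open>auto simp: indicator_def\<close>)
qed (auto simp: indicator_def)

context
  fixes d :: "real \<Rightarrow> real" and p :: real
  assumes dm: "d \<in> borel_measurable borel" and d01: "\<forall>s. 0 \<le> d s \<and> d s \<le> 1"
    and dr1: "\<forall>s. 0 < d s \<longrightarrow> p \<le> s - fd" and dr2: "\<forall>s. d s < 1 \<longrightarrow> s - fd \<le> p"
begin

lemma dval: "s > p + fd \<Longrightarrow> d s = 1" "s < p + fd \<Longrightarrow> d s = 0"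
  using d01 dr1 dr2 by (smt (verit))+

lemma intg_d: "integrable G d"
  by (rule intg[where B=1]) (use d01 dm in auto)
lemma intg_1d: "integrable G (\<lambda>s. 1 - d s)"
  by (rule intg[where B=1]) (use d01 dm in auto)
lemma intg_1ds: "integrable G (\<lambda>s. (1 - d s) * s)"
proof (rule intg[where B=thi])
  fix s assume "tlo \<le> s" "s \<le> thi"
  then have "\<bar>(1 - d s) * s\<bar> = (1 - d s) * s" using d01 lo0 by simp
  also have "\<dots> \<le> s" using d01 \<open>tlo \<le> s\<close> lo0 by (simp add: mult_left_le_one_le)
  finally show "\<bar>(1 - d s) * s\<bar> \<le> thi" using \<open>s \<le> thi\<close> by simp
qed (use dm in auto)

lemma tv: "test_value G pt fd d p = - pt + p + Phi (p + fd)"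
proof -
  have "(\<integral>s. d s * (s - fd) + (1 - d s) * p \<partial>G) = (\<integral>s. p + max 0 (s - (p + fd)) \<partial>G)"
  proof (rule Bochner_Integration.integral_cong)
    fix s
    show "d s * (s - fd) + (1 - d s) * p = p + max 0 (s - (p + fd))"
      using dval[of s] by (cases "s > p + fd"; cases "s < p + fd") (auto simp: algebra_simps)
  qed simp
  also have "\<dots> = p + Phi (p + fd)" unfolding Phi_def
    by (subst Bochner_Integration.integral_add) (auto intro: intg_P simp: prob_space)
  finally show ?thesis unfolding test_value_def by simp
qed

lemma lin: "(\<integral>s. (1 - d s) * (p - s) \<partial>G) = p * (\<integral>s. 1 - d s \<partial>G) - (\<integral>s. (1 - d s) * s \<partial>G)"
proof -
  have "(\<integral>s. (1 - d s) * (p - s) \<partial>G) = (\<integral>s. p * (1 - d s) - (1 - d s) * s \<partial>G)"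
    by (rule Bochner_Integration.integral_cong) (auto simp: algebra_simps)
  also have "\<dots> = p * (\<integral>s. 1 - d s \<partial>G) - (\<integral>s. (1 - d s) * s \<partial>G)"
    by (subst Bochner_Integration.integral_diff) (auto intro: intg_1d intg_1ds)
  finally show ?thesis .
qed

lemma keyK: "Kf (p + fd) \<le> (\<integral>s. (1 - d s) * (p - s) \<partial>G)"
proof -
  let ?t = "p + fd"
  have "Kf ?t = (\<integral>s. max 0 (?t - s) - fd * indicator {..?t} s \<partial>G)"
    unfolding Kf_def Lf_def Gc_int
    by (subst Bochner_Integration.integral_diff) (auto intro: intg_L intg_ind)
  also have "\<dots> \<le> (\<integral>s. (1 - d s) * (p - s) \<partial>G)"
  proof (rule integral_mono)
    show "integrable G (\<lambda>s. max 0 (?t - s) - fd * indicator {..?t} s)"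
      by (intro Bochner_Integration.integrable_diff integrable_mult_right intg_L intg_ind)
    show "integrable G (\<lambda>s. (1 - d s) * (p - s))"
      using Bochner_Integration.integrable_diff[OF integrable_mult_left[OF intg_1d, of p] intg_1ds]
      by (simp add: algebra_simps)
    fix s
    show "max 0 (?t - s) - fd * indicator {..?t} s \<le> (1 - d s) * (p - s)"
    proof (cases "s > ?t")
      case True then show ?thesis using dval(1)[of s] by (simp add: indicator_def)
    next
      case False
      show ?thesis
      proof (cases "s < ?t")
        case True then show ?thesis using dval(2)[of s] by (simp add: indicator_def)
      next
        case False
        then have "s = ?t" using \<open>\<not> s > ?t\<close> by simp
        then show ?thesis using d01 fd0 by (simp add: indicator_def mult_left_le_one_le)
      qed
    qed
  qed
  finally show ?thesis .
qed

end


lemma cmb_bounds: assumes "low \<le> x" shows "tlo \<le> cond_mean_below G x \<and> cond_mean_below G x \<le> thi"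
proof (cases "0 < Gc x")
  case True
  let ?I = "(\<integral>s. indicator {..x} s * s \<partial>G)"
  have ii: "integrable G (\<lambda>s. indicator {..x} s * s)"
    by (rule intg[where B=thi]) (use lo0 in \<open>auto simp: indicator_def\<close>)
  have "tlo * Gc x = (\<integral>s. tlo * indicator {..x} s \<partial>G)" unfolding Gc_int by simp
  also have "\<dots> \<le> ?I"
    by (rule integral_mono_AE[OF _ ii]) (use intg_ind Gsupp in \<open>auto simp: indicator_def elim!: eventually_mono\<close>)
  finally have l: "tlo * Gc x \<le> ?I" .
  have "?I \<le> (\<integral>s. thi * indicator {..x} s \<partial>G)"
  proof (rule integral_mono_AE[OF ii])
    show "integrable G (\<lambda>s. thi * indicator {..x} s)" using intg_ind by simp
    show "AE s in G. indicator {..x} s * s \<le> thi * indicator {..x} s"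
      using Gsupp by eventually_elim (auto simp: indicator_def)
  qed
  also have "\<dots> = thi * Gc x" unfolding Gc_int by simp
  finally have u: "?I \<le> thi * Gc x" .
  have c: "cond_mean_below G x = ?I / Gc x"
    using True unfolding cond_mean_below_def set_lebesgue_integral_def Gc_def by simp
  show ?thesis unfolding c using l u True by (simp add: divide_simps)
next
  case False
  then have "x = low" using Gc_pos assms by force
  moreover have "cond_mean_below G x = x" using False unfolding cond_mean_below_def Gc_def by simp
  ultimately show ?thesis using low_ge low_le by simp
qed

lemma int_1m: "integrable G (f :: real \<Rightarrow> real) \<Longrightarrow> (\<integral>s. 1 - f s \<partial>G) = 1 - (\<integral>s. f s \<partial>G)"
  by (subst Bochner_Integration.integral_diff) (auto simp: prob_space integral_const)

lemma part_c:
  assumes thr: "eq_threshold G fd \<tau>" and K0: "Kf \<tau> = 0" and Kpos: "\<forall>x>\<tau>. Kf x > 0"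
    and fee: "pt < Phi (muG + fd)"
  shows "adversarial_equilibrium tlo thi muG G pt fd 1 (\<lambda>s. if \<tau> < s then 1 else 0) (\<tau> - fd)"
proof -
  define d :: "real \<Rightarrow> real" where "d = (\<lambda>s. if \<tau> < s then 1 else 0)"
  have dm: "d \<in> borel_measurable borel" unfolding d_def by measurable
  have d01: "\<forall>s. 0 \<le> d s \<and> d s \<le> 1" unfolding d_def by simp
  have dr1: "\<forall>s. 0 < d s \<longrightarrow> \<tau> - fd \<le> s - fd" unfolding d_def by simp
  have dr2: "\<forall>s. d s < 1 \<longrightarrow> s - fd \<le> \<tau> - fd" unfolding d_def by (simp add: not_less)
  have tle: "\<tau> \<le> muG + fd" using Kf_big[of \<tau>] K0 by simp
  have PhiT: "pt < Phi \<tau>" using Phi_anti[OF tle] fee by simp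
  have N: "(\<integral>s. 1 - d s \<partial>G) = Gc \<tau>" unfolding Gc_int
    by (rule Bochner_Integration.integral_cong) (auto simp: d_def indicator_def)
  have B: "(\<integral>s. (1 - d s) * s \<partial>G) = (\<integral>s\<in>{..\<tau>}. s \<partial>G)" unfolding set_lebesgue_integral_def
    by (rule Bochner_Integration.integral_cong) (auto simp: d_def indicator_def)
  have cm: "low \<le> \<tau>" "\<tau> - fd = cond_mean_below G \<tau>" using thr unfolding eq_thr_iff by auto
  have tv0: "test_value G pt fd d (\<tau> - fd) = - pt + (\<tau> - fd) + Phi \<tau>"
    using tv[OF dm d01 dr1 dr2] by simp
  have eq: "is_equilibrium tlo thi muG G pt fd 1 d (\<tau> - fd)"
    unfolding is_equilibrium_def Let_def
  proof (intro conjI)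
    show "tlo \<le> \<tau> - fd" "\<tau> - fd \<le> thi" using cmb_bounds[OF cm(1)] cm(2) by auto
    show "0 < (1::real) \<longrightarrow> \<tau> - fd \<le> test_value G pt fd d (\<tau> - fd)" using tv0 PhiT by simp
    show "0 < 1 - 1 + 1 * (\<integral>s. 1 - d s \<partial>G) \<longrightarrow>
      (\<tau> - fd) * (1 - 1 + 1 * (\<integral>s. 1 - d s \<partial>G)) = (1 - 1) * muG + 1 * (\<integral>s. (1 - d s) * s \<partial>G)"
    proof
      assume "0 < 1 - 1 + 1 * (\<integral>s. 1 - d s \<partial>G)"
      then have gp: "0 < Gc \<tau>" using N by simp
      have "(\<tau> - fd) * Gc \<tau> = (\<integral>s\<in>{..\<tau>}. s \<partial>G)"
        using cm(2) gp unfolding cond_mean_below_def Gc_def by simp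
      then show "(\<tau> - fd) * (1 - 1 + 1 * (\<integral>s. 1 - d s \<partial>G)) = (1 - 1) * muG + 1 * (\<integral>s. (1 - d s) * s \<partial>G)"
        using N B by simp
    qed
  qed (use dm d01 dr1 dr2 in auto)
  have rev0: "revenue G pt fd 1 d = pt + fd * (1 - Gc \<tau>)"
    unfolding revenue_def using int_1m[OF intg_d[OF dm d01 dr1 dr2]] N by simp
  have adv: "revenue G pt fd 1 d \<le> revenue G pt fd q' d'" if eq': "is_equilibrium tlo thi muG G pt fd q' d' p'" for q' d' p'
  proof -
    have e: "0 \<le> q'" "q' \<le> 1" "d' \<in> borel_measurable borel" "\<forall>s. 0 \<le> d' s \<and> d' s \<le> 1"
      "\<forall>s. 0 < d' s \<longrightarrow> p' \<le> s - fd" "\<forall>s. d' s < 1 \<longrightarrow> s - fd \<le> p'"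
      "q' < 1 \<longrightarrow> test_value G pt fd d' p' \<le> p'"
      "0 < (1 - q') + q' * (\<integral>s. 1 - d' s \<partial>G) \<longrightarrow>
        p' * ((1 - q') + q' * (\<integral>s. 1 - d' s \<partial>G)) = (1 - q') * muG + q' * (\<integral>s. (1 - d' s) * s \<partial>G)"
      using eq' unfolding is_equilibrium_def Let_def by auto
    define A where "A = (\<integral>s. 1 - d' s \<partial>G)"
    define Bq where "Bq = (\<integral>s. (1 - d' s) * s \<partial>G)"
    have A0: "0 \<le> A" unfolding A_def by (rule Bochner_Integration.integral_nonneg) (use e(4) in auto)
    have tv': "test_value G pt fd d' p' = - pt + p' + Phi (p' + fd)" by (rule tv[OF e(3-6)])
    have kk: "Kf (p' + fd) \<le> p' * A - Bq" using keyK[OF e(3-6)] lin[OF e(3-6)] unfolding A_def Bq_def by simp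
    have q1: "q' = 1"
    proof (rule ccontr)
      assume "q' \<noteq> 1"
      then have ql: "q' < 1" using e(2) by simp
      then have "Phi (p' + fd) \<le> pt" using e(7) tv' by simp
      then have "Phi (p' + fd) < Phi (muG + fd)" using fee by simp
      then have "muG + fd < p' + fd" using Phi_anti[of "p' + fd" "muG + fd"] by force
      then have pm: "muG < p'" by simp
      have Kp: "0 < Kf (p' + fd)" using Kf_big[of "p' + fd"] pm by simp
      have Np: "0 < (1 - q') + q' * A" using ql A0 e(1) by (smt (verit) mult_nonneg_nonneg)
      then have bay: "p' * ((1 - q') + q' * A) = (1 - q') * muG + q' * Bq" using e(8) unfolding A_def Bq_def by simp
      have t1: "0 < (1 - q') * (p' - muG)" using ql pm by simp
      have t2: "0 \<le> q' * (p' * A - Bq)" using e(1) kk Kp by simp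
      have "p' * ((1 - q') + q' * A) - ((1 - q') * muG + q' * Bq) = (1 - q') * (p' - muG) + q' * (p' * A - Bq)"
        by (simp add: algebra_simps)
      then show False using bay t1 t2 by simp
    qed
    have AG: "A \<le> Gc \<tau>"
    proof (cases "A = 0")
      case True then show ?thesis using Gc_ge0 by simp
    next
      case False
      then have "0 < A" using A0 by simp
      then have "p' * A = Bq" using e(8) q1 unfolding A_def Bq_def by simp
      then have "Kf (p' + fd) \<le> 0" using kk by simp
      then have pt: "p' + fd \<le> \<tau>" using Kpos by (meson not_le)
      show ?thesis unfolding A_def Gc_int
      proof (rule integral_mono[OF intg_1d[OF e(3-6)] intg_ind])
        fix s
        show "1 - d' s \<le> indicator {..\<tau>} s"
          using dval(1)[OF e(3-6), of s] e(4) pt by (cases "s \<le> \<tau>") (auto simp: indicator_def)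
      qed
    qed
    have "revenue G pt fd q' d' = pt + fd * (1 - A)"
      unfolding revenue_def q1 A_def using int_1m[OF intg_d[OF e(3-6)]] by simp
    then show ?thesis using rev0 AG fd0 by (simp add: mult_left_mono)
  qed
  show ?thesis unfolding adversarial_equilibrium_def d_def[symmetric] using eq adv by blast
qed

end

lemma mean_eq:
  assumes "unbiased_test F G"
  shows "mean_of F = (\<integral>s. s \<partial>G)"
proof -
  obtain J :: "(real \<times> real) measure" where J: "prob_space J" "sets J = sets borel"
    "distr J borel fst = F" "distr J borel snd = G"
    "\<forall>A \<in> sets (borel :: real measure).
            (\<integral>x. indicator A (snd x) * fst x \<partial>J) = (\<integral>x. indicator A (snd x) * snd x \<partial>J)"
    using assms unfolding unbiased_test_def by blast
  have e: "(\<integral>x. fst x \<partial>J) = (\<integral>x. snd x \<partial>J)" using J(5)[rule_format, of UNIV] by simp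
  have mf: "fst \<in> measurable J borel" "snd \<in> measurable J borel"
    by (subst measurable_cong_sets[OF J(2) refl], intro borel_measurable_continuous_onI continuous_intros)+
  have "mean_of F = (\<integral>x. x \<partial>distr J borel fst)" using J(3) unfolding mean_of_def by simp
  also have "\<dots> = (\<integral>x. fst x \<partial>J)" by (rule integral_distr[OF mf(1)]) simp
  also have "\<dots> = (\<integral>x. snd x \<partial>J)" by (rule e)
  also have "\<dots> = (\<integral>x. x \<partial>distr J borel snd)" by (rule integral_distr[OF mf(2), symmetric]) simp
  finally show ?thesis using J(4) by simp
qed
theorem lemma3:
  fixes F G :: "real measure" and \<theta>lo \<theta>hi \<phi>t \<phi>d :: real
  assumes F_prob: "prob_space F" and F_sets: "sets F = sets borel"
    and F_supp: "AE \<theta> in F. \<theta>lo \<le> \<theta> \<and> \<theta> \<le> \<theta>hi"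
    and F_lo_extreme: "\<forall>e>0. 0 < measure F {..<\<theta>lo + e}"
    and F_hi_extreme: "\<forall>e>0. 0 < measure F {\<theta>hi - e<..}"
    and bounds: "0 \<le> \<theta>lo" "\<theta>lo < \<theta>hi"
    and G_prob: "prob_space G" and G_sets: "sets G = sets borel"
    and G_supp: "AE s in G. \<theta>lo \<le> s \<and> s \<le> \<theta>hi"
    and unbiased: "unbiased_test F G"
    and fee_d: "0 \<le> \<phi>d"
    and fee_t: "\<phi>t < (\<integral>s\<in>{mean_of F + \<phi>d..\<theta>hi}. s - (mean_of F + \<phi>d) \<partial>G)"
  shows "(\<exists>\<tau>. highest_eq_threshold G \<phi>d \<tau>)
    \<and> (\<forall>\<tau>. low_score G \<le> \<tau> \<longrightarrow>
          (highest_eq_threshold G \<phi>d \<tau> \<longleftrightarrow>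
             \<tau> - \<phi>d = cond_mean_below G \<tau> \<and>
             (\<forall>\<tau>'>\<tau>. \<tau>' - \<phi>d > cond_mean_below G \<tau>')))
    \<and> (\<forall>\<tau>. highest_eq_threshold G \<phi>d \<tau> \<longrightarrow>
          (\<exists>q p0. 0 < q \<and>
             adversarial_equilibrium \<theta>lo \<theta>hi (mean_of F) G \<phi>t \<phi>d q
               (\<lambda>s. if \<tau> < s then 1 else 0) p0))"
proof -
  have loc: "Gsetup G \<theta>lo \<theta>hi \<phi>d"
    unfolding Gsetup_def Gsetup_axioms_def using G_prob G_sets G_supp bounds fee_d by auto
  interpret S: Gsetup G \<theta>lo \<theta>hi \<phi>d by (rule loc)
  have mu: "mean_of F = S.muG" unfolding S.muG_def by (rule mean_eq[OF unbiased])
  have fee: "\<phi>t < S.Phi (S.muG + \<phi>d)" using fee_t S.fee_le[of "S.muG + \<phi>d"] mu by simp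
  obtain \<sigma> where sg: "eq_threshold G \<phi>d \<sigma>" "S.Kf \<sigma> = 0" "\<forall>x>\<sigma>. S.Kf x > 0"
    using S.sigma_ex by blast
  have slow: "S.low \<le> \<sigma>" using sg(1) unfolding S.eq_thr_iff by simp
  have Kstrict: "\<tau>' - \<phi>d > cond_mean_below G \<tau>'" if "\<tau>' > \<sigma>" for \<tau>'
  proof -
    have "0 < S.Gc \<tau>'" using S.Gc_pos that slow by simp
    then show ?thesis using S.cmb_iff[of \<tau>'] sg(3) that by simp
  qed
  have thr_le: "\<tau>' \<le> \<sigma>" if "eq_threshold G \<phi>d \<tau>'" for \<tau>'
  proof (rule ccontr)
    assume "\<not> \<tau>' \<le> \<sigma>"
    then have "\<tau>' - \<phi>d > cond_mean_below G \<tau>'" using Kstrict by simp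
    then show False using that unfolding eq_threshold_def by simp
  qed
  have hi_iff: "highest_eq_threshold G \<phi>d \<tau> \<longleftrightarrow> \<tau> = \<sigma>" for \<tau>
  proof
    assume "highest_eq_threshold G \<phi>d \<tau>"
    then have "eq_threshold G \<phi>d \<tau>" "\<sigma> \<le> \<tau>" using sg(1) unfolding highest_eq_threshold_def by auto
    then show "\<tau> = \<sigma>" using thr_le by force
  next
    assume "\<tau> = \<sigma>"
    then show "highest_eq_threshold G \<phi>d \<tau>" unfolding highest_eq_threshold_def using sg(1) thr_le by auto
  qed
  have A: "\<exists>\<tau>. highest_eq_threshold G \<phi>d \<tau>" using hi_iff by blast
  have B: "\<forall>\<tau>. low_score G \<le> \<tau> \<longrightarrow>
          (highest_eq_threshold G \<phi>d \<tau> \<longleftrightarrow>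
             \<tau> - \<phi>d = cond_mean_below G \<tau> \<and>
             (\<forall>\<tau>'>\<tau>. \<tau>' - \<phi>d > cond_mean_below G \<tau>'))"
  proof (intro allI impI iffI)
    fix \<tau> assume "highest_eq_threshold G \<phi>d \<tau>"
    then have "\<tau> = \<sigma>" using hi_iff by simp
    then show "\<tau> - \<phi>d = cond_mean_below G \<tau> \<and> (\<forall>\<tau>'>\<tau>. \<tau>' - \<phi>d > cond_mean_below G \<tau>')"
      using sg(1) Kstrict unfolding eq_threshold_def by auto
  next
    fix \<tau> assume lo: "low_score G \<le> \<tau>"
      and h: "\<tau> - \<phi>d = cond_mean_below G \<tau> \<and> (\<forall>\<tau>'>\<tau>. \<tau>' - \<phi>d > cond_mean_below G \<tau>')"
    show "highest_eq_threshold G \<phi>d \<tau>"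
      unfolding highest_eq_threshold_def
    proof (intro conjI allI impI)
      show "eq_threshold G \<phi>d \<tau>" unfolding eq_threshold_def using lo h by simp
      fix \<tau>' assume "eq_threshold G \<phi>d \<tau>'"
      then have e: "\<tau>' - \<phi>d = cond_mean_below G \<tau>'" unfolding eq_threshold_def by simp
      show "\<tau>' \<le> \<tau>"
      proof (rule ccontr)
        assume "\<not> \<tau>' \<le> \<tau>"
        then have "\<tau>' - \<phi>d > cond_mean_below G \<tau>'" using h by simp
        then show False using e by simp
      qed
    qed
  qed
  have C: "\<forall>\<tau>. highest_eq_threshold G \<phi>d \<tau> \<longrightarrow>
          (\<exists>q p0. 0 < q \<and>
             adversarial_equilibrium \<theta>lo \<theta>hi (mean_of F) G \<phi>t \<phi>d q
               (\<lambda>s. if \<tau> < s then 1 else 0) p0)"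
  proof (intro allI impI)
    fix \<tau> assume "highest_eq_threshold G \<phi>d \<tau>"
    then have "\<tau> = \<sigma>" using hi_iff by simp
    then have "adversarial_equilibrium \<theta>lo \<theta>hi (mean_of F) G \<phi>t \<phi>d 1
               (\<lambda>s. if \<tau> < s then 1 else 0) (\<tau> - \<phi>d)"
      using S.part_c[OF sg fee] mu by simp
    then show "\<exists>q p0. 0 < q \<and>
             adversarial_equilibrium \<theta>lo \<theta>hi (mean_of F) G \<phi>t \<phi>d q
               (\<lambda>s. if \<tau> < s then 1 else 0) p0" by (intro exI[of _ 1] exI[of _ "\<tau> - \<phi>d"]) simp
  qed
  show ?thesis using A B C by blast
qed

end
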